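(* The theory $\mathcal{T}+\mathrm{IND}(\mathrm{Literal}(\mathcal{T}))$ proves the (universal closures of the) formulas $x\neq0\to x=s(p(x))$, $x+y=y+x$, $(x+y)+z=x+(y+z)$, and $x+y=x+z\to y=z$.
   Context: Language $\{0/0,s/1,p/1,+/2\}$; $\mathcal{T}$ has axioms (universally closed) $0\neq s(x)$, $p(0)=0$, $p(s(x))=x$, $x+0=x$, $x+s(y)=s(x+y)$. $\mathrm{Literal}(\mathcal{T})$ is the set of literals (atoms and negated atoms) of this language. $I_x\varphi=\forall\vec z(\varphi(0,\vec z)\wedge\forall x(\varphi(x,\vec z)\to\varphi(s(x),\vec z))\to\forall x\varphi(x,\vec z))$ and $\mathrm{IND}(\Gamma)=\{I_x\gamma:\gamma\in\Gamma\}$. *)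

theory Defs
  imports Main
begin

datatype trm = Var nat | Zero | S trm | P trm | Plus trm trm

datatype fm = Eq trm trm | Neg fm | Conj fm fm | Imp fm fm | All nat fm

text \<open>Substitution of a term for a variable.  It is only ever applied to
  quantifier-free formulas (literals), where it is capture free; under a binder
  of the same variable it stops.\<close>

fun subst_t :: "nat \<Rightarrow> trm \<Rightarrow> trm \<Rightarrow> trm" where
  "subst_t x r (Var y) = (if y = x then r else Var y)"
| "subst_t x r Zero = Zero"
| "subst_t x r (S t) = S (subst_t x r t)"
| "subst_t x r (P t) = P (subst_t x r t)"
| "subst_t x r (Plus t u) = Plus (subst_t x r t) (subst_t x r u)"

fun subst :: "nat \<Rightarrow> trm \<Rightarrow> fm \<Rightarrow> fm" where
  "subst x r (Eq t u) = Eq (subst_t x r t) (subst_t x r u)"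
| "subst x r (Neg f) = Neg (subst x r f)"
| "subst x r (Conj f g) = Conj (subst x r f) (subst x r g)"
| "subst x r (Imp f g) = Imp (subst x r f) (subst x r g)"
| "subst x r (All y f) = (if y = x then All y f else All y (subst x r f))"

record 'a struc =
  zer :: 'a
  suc :: "'a \<Rightarrow> 'a"
  prd :: "'a \<Rightarrow> 'a"
  pls :: "'a \<Rightarrow> 'a \<Rightarrow> 'a"

fun eval :: "'a struc \<Rightarrow> (nat \<Rightarrow> 'a) \<Rightarrow> trm \<Rightarrow> 'a" where
  "eval M e (Var x) = e x"
| "eval M e Zero = zer M"
| "eval M e (S t) = suc M (eval M e t)"
| "eval M e (P t) = prd M (eval M e t)"
| "eval M e (Plus t u) = pls M (eval M e t) (eval M e u)"

fun sat :: "'a struc \<Rightarrow> (nat \<Rightarrow> 'a) \<Rightarrow> fm \<Rightarrow> bool" where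
  "sat M e (Eq t u) = (eval M e t = eval M e u)"
| "sat M e (Neg f) = (\<not> sat M e f)"
| "sat M e (Conj f g) = (sat M e f \<and> sat M e g)"
| "sat M e (Imp f g) = (sat M e f \<longrightarrow> sat M e g)"
| "sat M e (All x f) = (\<forall>a. sat M (e(x := a)) f)"

definition valid :: "'a struc \<Rightarrow> fm \<Rightarrow> bool" where
  "valid M f \<longleftrightarrow> (\<forall>e. sat M e f)"

text \<open>Used with 'a universally quantified at theorem level;
  by Goedel's completeness theorem this is provability.\<close>
definition entails :: "'a itself \<Rightarrow> fm set \<Rightarrow> fm \<Rightarrow> bool" where
  "entails _ \<Gamma> f \<longleftrightarrow> (\<forall>M :: 'a struc. (\<forall>g\<in>\<Gamma>. valid M g) \<longrightarrow> valid M f)"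

abbreviation "vx \<equiv> Var 0"
abbreviation "vy \<equiv> Var 1"
abbreviation "vz \<equiv> Var 2"

definition T_ax :: "fm set" where
  "T_ax = { Neg (Eq Zero (S vx)),
            Eq (P Zero) Zero,
            Eq (P (S vx)) vx,
            Eq (Plus vx Zero) vx,
            Eq (Plus vx (S vy)) (S (Plus vx vy)) }"

definition is_literal :: "fm \<Rightarrow> bool" where
  "is_literal f \<longleftrightarrow> (\<exists>t u. f = Eq t u \<or> f = Neg (Eq t u))"

definition Literal :: "fm set" where
  "Literal = {f. is_literal f}"

text \<open>I_x phi; the outer universal closure over the parameters z is implicit in
  the semantics of validity.\<close>
definition Ind :: "nat \<Rightarrow> fm \<Rightarrow> fm" where
  "Ind x f = Imp (Conj (subst x Zero f) (All x (Imp f (subst x (S (Var x)) f)))) (All x f)"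

definition IND :: "fm set \<Rightarrow> fm set" where
  "IND \<Gamma> = {Ind x g | x g. g \<in> \<Gamma>}"

end

theory Submission
  imports Defs
begin

lemma eval_subst: "eval M e (subst_t x r t) = eval M (e(x := eval M e r)) t"
  by (induction t) auto

lemma indEq:
  assumes H: "\<forall>g\<in>T_ax \<union> IND Literal. valid M g"
    and base: "eval M (e(x:=zer M)) t = eval M (e(x:=zer M)) u"
    and step: "\<And>a. eval M (e(x:=a)) t = eval M (e(x:=a)) u \<Longrightarrow>
                 eval M (e(x:=suc M a)) t = eval M (e(x:=suc M a)) u"
  shows "eval M (e(x:=a)) t = eval M (e(x:=a)) u"
proof -
  have "Ind x (Eq t u) \<in> IND Literal"
    unfolding IND_def Literal_def is_literal_def by blast
  then have "sat M e (Ind x (Eq t u))" using H valid_def by blast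
  moreover have "sat M e (subst x Zero (Eq t u))" using base by (simp add: eval_subst)
  moreover have "sat M e (All x (Imp (Eq t u) (subst x (S (Var x)) (Eq t u))))"
    using step by (simp add: eval_subst)
  ultimately show ?thesis unfolding Ind_def by simp
qed

lemma indNeq:
  assumes H: "\<forall>g\<in>T_ax \<union> IND Literal. valid M g"
    and base: "eval M (e(x:=zer M)) t \<noteq> eval M (e(x:=zer M)) u"
    and step: "\<And>a. eval M (e(x:=a)) t \<noteq> eval M (e(x:=a)) u \<Longrightarrow>
                 eval M (e(x:=suc M a)) t \<noteq> eval M (e(x:=suc M a)) u"
  shows "eval M (e(x:=a)) t \<noteq> eval M (e(x:=a)) u"
proof -
  have "Ind x (Neg (Eq t u)) \<in> IND Literal"
    unfolding IND_def Literal_def is_literal_def by blast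
  then have "sat M e (Ind x (Neg (Eq t u)))" using H valid_def by blast
  moreover have "sat M e (subst x Zero (Neg (Eq t u)))" using base by (simp add: eval_subst)
  moreover have "sat M e (All x (Imp (Neg (Eq t u)) (subst x (S (Var x)) (Neg (Eq t u)))))"
    using step by (simp add: eval_subst)
  ultimately show ?thesis unfolding Ind_def by simp
qed

lemma axs:
  assumes H: "\<forall>g\<in>T_ax \<union> IND Literal. valid M g"
  shows "zer M \<noteq> suc M a" "prd M (zer M) = zer M" "prd M (suc M a) = a"
    "pls M a (zer M) = a" "pls M a (suc M b) = suc M (pls M a b)"
proof -
  have v: "\<And>f. f \<in> T_ax \<Longrightarrow> sat M e f" for e using H valid_def by blast
  let ?e = "\<lambda>n::nat. if n = 0 then a else b"
  have A: "sat M ?e (Neg (Eq Zero (S vx)))" "sat M ?e (Eq (P Zero) Zero)" "sat M ?e (Eq (P (S vx)) vx)"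
    "sat M ?e (Eq (Plus vx Zero) vx)" "sat M ?e (Eq (Plus vx (S vy)) (S (Plus vx vy)))"
    by (rule v; simp add: T_ax_def)+
  show "zer M \<noteq> suc M a" using A(1) by simp
  show "prd M (zer M) = zer M" using A(2) by simp
  show "prd M (suc M a) = a" using A(3) by simp
  show "pls M a (zer M) = a" using A(4) by simp
  show "pls M a (suc M b) = suc M (pls M a b)" using A(5) by simp
qed

lemma sucinj:
  assumes H: "\<forall>g\<in>T_ax \<union> IND Literal. valid M g" and "suc M a = suc M b"
  shows "a = b"
  using axs(3)[OF H, of a] axs(3)[OF H, of b] assms(2) by metis

lemma pred_fact:
  assumes H: "\<forall>g\<in>T_ax \<union> IND Literal. valid M g" and nz: "z \<noteq> zer M"
  shows "z = suc M (prd M z)"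
proof (rule ccontr)
  assume c: "z \<noteq> suc M (prd M z)"
  let ?e = "(\<lambda>_. z)"
  have "eval M (?e(0:=z)) (Var 0) \<noteq> eval M (?e(0:=z)) (Var 1)"
  proof (rule indNeq[OF H])
    show "eval M (?e(0:=zer M)) (Var 0) \<noteq> eval M (?e(0:=zer M)) (Var 1)" using nz by simp
  next
    fix a assume "eval M (?e(0:=a)) (Var 0) \<noteq> eval M (?e(0:=a)) (Var 1)"
    then have "a \<noteq> z" by simp
    show "eval M (?e(0:=suc M a)) (Var 0) \<noteq> eval M (?e(0:=suc M a)) (Var 1)"
    proof
      assume "eval M (?e(0:=suc M a)) (Var 0) = eval M (?e(0:=suc M a)) (Var 1)"
      then have "suc M a = z" by simp
      then have "prd M z = a" using axs(3)[OF H] by metis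
      then show False using c \<open>suc M a = z\<close> by simp
    qed
  qed
  then show False by simp
qed

lemma zero_add:
  assumes H: "\<forall>g\<in>T_ax \<union> IND Literal. valid M g"
  shows "pls M (zer M) a = a"
proof -
  have "eval M (e(0:=a)) (Plus Zero (Var 0)) = eval M (e(0:=a)) (Var 0)" for e
    by (rule indEq[OF H]) (simp_all add: axs[OF H])
  then show ?thesis by simp
qed

lemma suc_add:
  assumes H: "\<forall>g\<in>T_ax \<union> IND Literal. valid M g"
  shows "pls M (suc M b) a = suc M (pls M b a)"
proof -
  let ?e = "(\<lambda>_. b)"
  have "eval M (?e(0:=a)) (Plus (S (Var 1)) (Var 0)) = eval M (?e(0:=a)) (S (Plus (Var 1) (Var 0)))"
    by (rule indEq[OF H]) (simp_all add: axs[OF H])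
  then show ?thesis by simp
qed

lemma add_comm:
  assumes H: "\<forall>g\<in>T_ax \<union> IND Literal. valid M g"
  shows "pls M b a = pls M a b"
proof -
  let ?e = "(\<lambda>_. b)"
  have "eval M (?e(0:=a)) (Plus (Var 1) (Var 0)) = eval M (?e(0:=a)) (Plus (Var 0) (Var 1))"
    by (rule indEq[OF H]) (simp_all add: axs[OF H] zero_add[OF H] suc_add[OF H])
  then show ?thesis by simp
qed

lemma add_assoc:
  assumes H: "\<forall>g\<in>T_ax \<union> IND Literal. valid M g"
  shows "pls M (pls M x y) z = pls M x (pls M y z)"
proof -
  let ?e = "(\<lambda>n::nat. if n = 1 then x else y)"
  have "eval M (?e(0:=z)) (Plus (Plus (Var 1) (Var 2)) (Var 0)) = eval M (?e(0:=z)) (Plus (Var 1) (Plus (Var 2) (Var 0)))"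
    by (rule indEq[OF H]) (simp_all add: axs[OF H])
  then show ?thesis by simp
qed

lemma add_cancel:
  assumes H: "\<forall>g\<in>T_ax \<union> IND Literal. valid M g" and eq: "pls M x y = pls M x z"
  shows "y = z"
proof (rule ccontr)
  assume ne: "y \<noteq> z"
  let ?e = "(\<lambda>n::nat. if n = 1 then y else z)"
  have "eval M (?e(0:=x)) (Plus (Var 1) (Var 0)) \<noteq> eval M (?e(0:=x)) (Plus (Var 2) (Var 0))"
  proof (rule indNeq[OF H])
    show "eval M (?e(0:=zer M)) (Plus (Var 1) (Var 0)) \<noteq> eval M (?e(0:=zer M)) (Plus (Var 2) (Var 0))"
      using ne by (simp add: axs[OF H])
  next
    fix a assume "eval M (?e(0:=a)) (Plus (Var 1) (Var 0)) \<noteq> eval M (?e(0:=a)) (Plus (Var 2) (Var 0))"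
    then show "eval M (?e(0:=suc M a)) (Plus (Var 1) (Var 0)) \<noteq> eval M (?e(0:=suc M a)) (Plus (Var 2) (Var 0))"
      using sucinj[OF H] by (auto simp add: axs[OF H])
  qed
  then show False using eq add_comm[OF H] by simp
qed

theorem lemma19:
  shows "entails TYPE('a) (T_ax \<union> IND Literal) (Imp (Neg (Eq vx Zero)) (Eq vx (S (P vx))))
       \<and> entails TYPE('a) (T_ax \<union> IND Literal) (Eq (Plus vx vy) (Plus vy vx))
       \<and> entails TYPE('a) (T_ax \<union> IND Literal) (Eq (Plus (Plus vx vy) vz) (Plus vx (Plus vy vz)))
       \<and> entails TYPE('a) (T_ax \<union> IND Literal) (Imp (Eq (Plus vx vy) (Plus vx vz)) (Eq vy vz))"
  unfolding entails_def valid_def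
proof (intro conjI allI impI)
  fix M :: "'a struc" and e assume H: "\<forall>g\<in>T_ax \<union> IND Literal. \<forall>e. sat M e g"
  then have H': "\<forall>g\<in>T_ax \<union> IND Literal. valid M g" by (simp add: valid_def)
  show "sat M e (Imp (Neg (Eq vx Zero)) (Eq vx (S (P vx))))"
    using pred_fact[OF H', of "e 0"] by simp
  show "sat M e (Eq (Plus vx vy) (Plus vy vx))"
    using add_comm[OF H', of "e 1" "e 0"] by simp
  show "sat M e (Eq (Plus (Plus vx vy) vz) (Plus vx (Plus vy vz)))"
    using add_assoc[OF H', of "e 0" "e 1" "e 2"] by simp
  show "sat M e (Imp (Eq (Plus vx vy) (Plus vx vz)) (Eq vy vz))"
    using add_cancel[OF H', of "e 0" "e 1" "e 2"] by simp
qed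

end
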